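(* Let $2^{t-1}<n\le 2^t-4$, $i=2^t-3-n$, $j=n-2^{t-1}+1$, $W_2=\mathbb{F}_2[w_2,w_3]$. Then for all $x,y,z\in W_2$, \[ q_{n-2}x+q_{n-1}y+q_nz=\det\begin{pmatrix} x& r_j& w_3q_{i-1}\\ y& w_3r_{j-2}& q_{i+1}\\ z& r_{j-1}& q_i\end{pmatrix} \] (over $\mathbb{F}_2$). Moreover, the kernel of the $W_2$-linear map $d_1\colon W_2^{\oplus 3}\to W_2$, $(x,y,z)\mapsto q_{n-2}x+q_{n-1}y+q_nz$, is a free graded $W_2$-module of rank $2$ with basis $u=(r_j,\,w_3r_{j-2},\,r_{j-1})^{\mathrm t}$ and $v=(w_3q_{i-1},\,q_{i+1},\,q_i)^{\mathrm t}$.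
   Context: $W_2$ is graded by $\deg w_2=2,\deg w_3=3$. $q_0=1$, $q_m=0$ for $m<0$, $q_m=w_2q_{m-2}+w_3q_{m-3}$ for $m\ge1$; $r_0=1$, $r_m=0$ for $m<0$, $r_{m+1}=w_2r_m+w_3^2r_{m-2}$ for $m\ge0$. *)

theory Defs
  imports "HOL-Analysis.Analysis" "HOL-Library.Z2" "HOL-Computational_Algebra.Polynomial"
begin

text \<open>W_2 = F_2[w_2, w_3], modelled as (F_2[w_3])[w_2], i.e. type bit poly poly.
  The outer variable is w_2, the inner (coefficient) variable is w_3.\<close>
type_synonym W2 = "bit poly poly"

definition w2 :: W2 where "w2 = [:0, 1:]"
definition w3 :: W2 where "w3 = [:[:0, 1:]:]"

definition whom :: "int \<Rightarrow> W2 \<Rightarrow> bool" where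
  "whom d p \<longleftrightarrow> (\<forall>a b. coeff (coeff p a) b \<noteq> 0 \<longrightarrow> int (2*a + 3*b) = d)"

function q :: "int \<Rightarrow> W2" where
  "q m = (if m < 0 then 0 else if m = 0 then 1 else w2 * q (m - 2) + w3 * q (m - 3))"
  by auto
termination by (relation "Wellfounded.measure (\<lambda>m. nat (m + 1))") auto

function r :: "int \<Rightarrow> W2" where
  "r m = (if m < 0 then 0 else if m = 0 then 1 else w2 * r (m - 1) + w3^2 * r (m - 3))"
  by auto
termination by (relation "Wellfounded.measure (\<lambda>m. nat (m + 1))") auto

declare q.simps [simp del] r.simps [simp del]

definition d1 :: "nat \<Rightarrow> W2 \<Rightarrow> W2 \<Rightarrow> W2 \<Rightarrow> W2" where
  "d1 n x y z = q (int n - 2) * x + q (int n - 1) * y + q (int n) * z"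

text \<open>Grading on the source W_2^3 making d_1 degree-preserving: an element (x,y,z)
  has degree e iff x, y, z are homogeneous of degrees e-(n-2), e-(n-1), e-n.\<close>
definition hom3 :: "nat \<Rightarrow> int \<Rightarrow> W2 \<times> W2 \<times> W2 \<Rightarrow> bool" where
  "hom3 n e t \<longleftrightarrow> (case t of (x, y, z) \<Rightarrow>
      whom (e - (int n - 2)) x \<and> whom (e - (int n - 1)) y \<and> whom (e - int n) z)"

end

theory Submission
  imports Defs
begin
lemma bit_two: "(x::bit) + x = 0" by (cases x) auto
lemma W2_two: "(x::W2) + x = 0"
  by (rule poly_eqI, rule poly_eqI) (simp only: coeff_add bit_two coeff_0)
lemma W2_neg: "- (x::W2) = x" using W2_two[of x] by (metis add_eq_0_iff)
lemma W2_minus: "(a::W2) - b = a + b" by (simp add: W2_neg)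
lemma W2_2: "(2::W2) = 0" by (metis W2_two one_add_one)
lemma W2_2x: "2 * (x::W2) = 0" by (simp add: W2_2)

lemma q_neg: "m < 0 \<Longrightarrow> q m = 0" by (subst q.simps) simp
lemma q_0: "q 0 = 1" by (subst q.simps) simp
lemma q_rec: "m \<ge> 1 \<Longrightarrow> q m = w2 * q (m - 2) + w3 * q (m - 3)" by (subst q.simps) simp
lemma r_neg: "m < 0 \<Longrightarrow> r m = 0" by (subst r.simps) simp
lemma r_0: "r 0 = 1" by (subst r.simps) simp
lemma r_rec: "m \<ge> 1 \<Longrightarrow> r m = w2 * r (m - 1) + w3^2 * r (m - 3)" by (subst r.simps) simp

lemma L0: "a \<ge> -1 \<Longrightarrow> b \<ge> 0 \<Longrightarrow>
  q (a + b) = q a * q b + q (a+1) * q (b-1) + w3 * q (a-1) * q (b-2)"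
proof (induction a arbitrary: b rule: int_ge_induct)
  case base
  then show ?case by (simp add: q_neg q_0)
next
  case (step a)
  have ih: "q (a + (b+1)) = q a * q (b+1) + q (a+1) * q b + w3 * q (a-1) * q (b-1)"
    using step.IH[of "b+1"] step.prems by simp
  have r1: "q (b+1) = w2 * q (b-1) + w3 * q (b-2)" using q_rec[of "b+1"] step.prems by simp
  have r2: "q (a+2) = w2 * q a + w3 * q (a-1)" using q_rec[of "a+2"] step.hyps by simp
  have "q (a + 1 + b) = q (a + (b+1))" by (simp add: ac_simps)
  also have "\<dots> = q (a+1) * q b + q (a+2) * q (b-1) + w3 * q a * q (b-2)"
    unfolding ih r1 r2 by (simp add: algebra_simps)
  finally show ?case by (simp add: ac_simps)
qed


lemma L1_nat: "\<forall>N. int k + 1 \<le> N \<longrightarrow> q (N - 2 + int k) =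
   r (int k) * q (N - 2 - int k) + w3 * r (int k - 1) * q (N - 3 - int k) + w3 * q (int k - 2) * q (N - 3)"
proof (induction k rule: less_induct)
  case (less k)
  show ?case
  proof (cases "k \<le> 1")
    case True
    then consider "k = 0" | "k = 1" by linarith
    then show ?thesis
    proof cases
      case 1 then show ?thesis by (simp add: q_neg r_neg r_0)
    next
      case 2
      show ?thesis
      proof (intro allI impI)
        fix N :: int assume "int k + 1 \<le> N"
        then show "q (N - 2 + int k) =
   r (int k) * q (N - 2 - int k) + w3 * r (int k - 1) * q (N - 3 - int k) + w3 * q (int k - 2) * q (N - 3)"
          using 2 q_rec[of "N - 1"] r_rec[of 1] by (simp add: q_neg r_neg r_0 algebra_simps)
      qed
    qed
  next
    case False
    then obtain j where kj: "k = Suc j" and j1: "j \<ge> 1" by (cases k) auto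
    show ?thesis
    proof (intro allI impI)
      fix N :: int assume N: "int k + 1 \<le> N"
      define J where "J = int j"
      have J1: "J \<ge> 1" using j1 J_def by simp
      have NJ: "N \<ge> J + 2" using N kj J_def by simp
      have h1: "\<forall>N. J + 1 \<le> N \<longrightarrow> q (N - 2 + J) =
   r J * q (N - 2 - J) + w3 * r (J - 1) * q (N - 3 - J) + w3 * q (J - 2) * q (N - 3)"
        using less.IH[of j] kj J_def by simp
      have h2: "\<forall>N. (J - 1) + 1 \<le> N \<longrightarrow> q (N - 2 + (J - 1)) =
   r (J - 1) * q (N - 2 - (J - 1)) + w3 * r (J - 1 - 1) * q (N - 3 - (J - 1)) + w3 * q (J - 1 - 2) * q (N - 3)"
        using less.IH[of "j - 1"] kj J_def j1 by (simp add: of_nat_diff)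
      have e1: "N + 1 - 2 + J = N - 1 + J" "N + 1 - 2 - J = N - 1 - J" "N + 1 - 3 - J = N - 2 - J" "N + 1 - 3 = N - 2"
        "N - 1 - 2 + (J - 1) = N - 4 + J" "N - 1 - 2 - (J-1) = N - 2 - J" "J - 1 - 1 = J - 2" "N - 1 - 3 - (J-1) = N - 3 - J"
        "J - 1 - 2 = J - 3" "N - 1 - 3 = N - 4" "J - 2 + (N - 2) = N - 4 + J" "J - 2 + 1 = J - 1" "N - 2 - 1 = N - 3"
        "J - 2 - 1 = J - 3" "N - 2 - 2 = N - 4" by simp_all
      have IH1: "q (N - 1 + J) = r J * q (N - 1 - J) + w3 * r (J - 1) * q (N - 2 - J) + w3 * q (J - 2) * q (N - 2)"
        using h1[rule_format, of "N+1", unfolded e1] NJ by simp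
      have IH2: "q (N - 4 + J) = r (J-1) * q (N - 2 - J) + w3 * r (J - 2) * q (N - 3 - J) + w3 * q (J - 3) * q (N - 4)"
        using h2[rule_format, of "N-1", unfolded e1] NJ by (simp add: algebra_simps)
      have A: "q (N - 4 + J) = q (J-2) * q (N-2) + q (J - 1) * q (N - 3) + w3 * q (J - 3) * q (N - 4)"
        using L0[of "J - 2" "N - 2", unfolded e1] J1 NJ by simp
      have R1: "r (J+1) = w2 * r J + w3^2 * r (J - 2)" using r_rec[of "J+1"] J1 by simp
      have R2: "q (N - 1 - J) = w2 * q (N - 3 - J) + w3 * q (N - 4 - J)" using q_rec[of "N - 1 - J"] NJ by (simp add: algebra_simps)
      have "q (N - 1 + J) = r (J+1) * q (N - 3 - J) + w3 * r J * q (N - 4 - J) + w3 * q (J - 1) * q (N - 3)"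
      proof -
        have "q (N - 1 + J) + (r (J+1) * q (N - 3 - J) + w3 * r J * q (N - 4 - J) + w3 * q (J - 1) * q (N - 3))
          = w3 * (q (N - 4 + J) + (r (J-1) * q (N - 2 - J) + w3 * r (J - 2) * q (N - 3 - J) + w3 * q (J - 3) * q (N - 4)))
            + w3 * (q (N - 4 + J) + (q (J-2) * q (N-2) + q (J - 1) * q (N - 3) + w3 * q (J - 3) * q (N - 4)))"
          unfolding IH1 R1 R2 by (simp add: algebra_simps W2_2x power2_eq_square)
        also have "\<dots> = 0"
        proof -
          have z1: "q (N - 4 + J) + (r (J-1) * q (N - 2 - J) + w3 * r (J - 2) * q (N - 3 - J) + w3 * q (J - 3) * q (N - 4)) = 0"
            unfolding IH2 by (rule W2_two)
          have z2: "q (N - 4 + J) + (q (J-2) * q (N-2) + q (J - 1) * q (N - 3) + w3 * q (J - 3) * q (N - 4)) = 0"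
            unfolding A by (rule W2_two)
          show ?thesis unfolding z1 z2 by simp
        qed
        finally show ?thesis using W2_two by (metis add_eq_0_iff W2_neg)
      qed
      then show "q (N - 2 + int k) =
   r (int k) * q (N - 2 - int k) + w3 * r (int k - 1) * q (N - 3 - int k) + w3 * q (int k - 2) * q (N - 3)"
        using kj J_def by (simp add: algebra_simps)
    qed
  qed
qed

lemma L1: "j \<ge> 0 \<Longrightarrow> N \<ge> j + 1 \<Longrightarrow> q (N - 2 + j) =
   r j * q (N - 2 - j) + w3 * r (j - 1) * q (N - 3 - j) + w3 * q (j - 2) * q (N - 3)"
  using L1_nat[of "nat j"] by simp


lemma W2_sq: "((a::W2) + b)^2 = a^2 + b^2"
  by (simp add: power2_eq_square algebra_simps W2_2)

lemma dbl_nat: "\<forall>m. nat m = k \<longrightarrow> q (2*m) = q m ^2 + w2 * q (m-1)^2 \<and> q (2*m+1) = w3 * q (m-1)^2"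
proof (induction k rule: less_induct)
  case (less k)
  show ?case
  proof (intro allI impI)
    fix m :: int assume mk: "nat m = k"
    show "q (2*m) = q m ^2 + w2 * q (m-1)^2 \<and> q (2*m+1) = w3 * q (m-1)^2"
    proof (cases "m \<le> 0")
      case True
      then consider "m < 0" | "m = 0" by linarith
      then show ?thesis
      proof cases
        case 1 then show ?thesis by (simp add: q_neg)
      next
        case 2 then show ?thesis using q_rec[of 1] by (simp add: q_neg q_0)
      qed
    next
      case False
      have P1: "q (2*(m-1)) = q (m-1) ^2 + w2 * q (m-1-1)^2 \<and> q (2*(m-1)+1) = w3 * q (m-1-1)^2"
      proof -
        have "nat (m-1) < k" using mk False by simp
        from less.IH[OF this, rule_format, of "m-1"] show ?thesis by simp
      qed
      have P2: "q (2*(m-2)) = q (m-2) ^2 + w2 * q (m-2-1)^2 \<and> q (2*(m-2)+1) = w3 * q (m-2-1)^2"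
      proof (cases "m = 1")
        case True then show ?thesis by (simp add: q_neg)
      next
        case F2: False
        have "nat (m-2) < k" using mk False by simp
        from less.IH[OF this, rule_format, of "m-2"] show ?thesis by simp
      qed
      have e: "2*(m-1) = 2*m-2" "m-1-1 = m-2" "2*(m-1)+1 = 2*m-1" "2*(m-2)+1 = 2*m-3" "m-2-1 = m-3" by simp_all
      have a1: "q (2*m-2) = q (m-1) ^2 + w2 * q (m-2)^2" "q (2*m-1) = w3 * q (m-2)^2" using P1 unfolding e by auto
      have a2: "q (2*m-3) = w3 * q (m-3)^2" using P2 unfolding e by auto
      have r1: "q (2*m) = w2 * q (2*m-2) + w3 * q (2*m-3)" using q_rec[of "2*m"] False by simp
      have r2: "q (2*m+1) = w2 * q (2*m-1) + w3 * q (2*m-2)" using q_rec[of "2*m+1"] False by simp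
      have r3: "q m = w2 * q (m-2) + w3 * q (m-3)" using q_rec[of m] False by simp
      show ?thesis
      proof
        show "q (2*m) = q m ^2 + w2 * q (m-1)^2"
          unfolding r1 r3 W2_sq a1 a2 by (simp add: power2_eq_square algebra_simps)
        show "q (2*m+1) = w3 * q (m-1)^2"
          unfolding r2 a1 by (simp add: power2_eq_square algebra_simps W2_2x)
      qed
    qed
  qed
qed

lemma dbl_odd: "q (2*m+1) = w3 * q (m-1)^2"
  using dbl_nat[of "nat m"] by auto

lemma q_pow: "s \<ge> 1 \<Longrightarrow> q (2^s - 3) = 0"
proof (induction s rule: dec_induct)
  case base then show ?case by (simp add: q_neg)
next
  case (step s)
  have "(2::int)^Suc s - 3 = 2 * (2^s - 2) + 1" by simp
  then show ?case using dbl_odd[of "2^s - 2"] step.IH by (simp add: algebra_simps)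
qed

definition h :: "W2 \<Rightarrow> bit poly" where "h f = map_poly (\<lambda>c. coeff c 0) f"

lemma coeff_h: "coeff (h f) a = coeff (coeff f a) 0"
  unfolding h_def by (simp add: coeff_map_poly)

lemma h_add: "h (f + g) = h f + h g"
  by (rule poly_eqI) (simp add: coeff_h)

lemma h_mult: "h (f * g) = h f * h g"
  by (rule poly_eqI) (simp only: coeff_h coeff_mult[of f g] coeff_mult[of "h f" "h g"] coeff_sum coeff_mult_0)

lemma h_w2: "h w2 = [:0,1:]"
  by (rule poly_eqI) (simp add: coeff_h w2_def coeff_pCons split: nat.split)

lemma h_w3: "h w3 = 0"
  by (rule poly_eqI) (simp add: coeff_h w3_def coeff_pCons split: nat.split)

lemma h_dvd: "w3 dvd f \<Longrightarrow> h f = 0"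
  by (auto simp: h_mult h_w3)

lemma h_zero_dvd: assumes "h f = 0" shows "w3 dvd f"
proof -
  define g where "g = map_poly (\<lambda>c. c div [:0,1:]) f"
  have "f = w3 * g"
  proof (rule poly_eqI)
    fix a
    have "coeff (h f) a = 0" using assms by simp
    hence "poly (coeff f a) 0 = 0" by (simp add: coeff_h poly_0_coeff_0)
    hence d: "[:0,1:] dvd coeff f a" using poly_eq_0_iff_dvd[of "coeff f a" 0] by simp
    have "coeff (w3 * g) a = [:0,1:] * (coeff f a div [:0,1:])"
      by (simp add: w3_def g_def coeff_map_poly)
    also have "\<dots> = coeff f a" by (rule dvd_mult_div_cancel[OF d])
    finally show "coeff f a = coeff (w3 * g) a" by simp
  qed
  then show ?thesis by (metis dvdI)
qed

lemma h_q: "h (q m) = (if m \<ge> 0 \<and> even m then [:0,1:]^(nat m div 2) else 0)"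
proof (induction "nat (m+1)" arbitrary: m rule: less_induct)
  case less
  show ?case
  proof (cases "m \<le> 0")
    case True
    then show ?thesis by (cases "m = 0") (simp_all add: q_neg q_0 h_def)
  next
    case False
    have ih: "h (q (m-2)) = (if m - 2 \<ge> 0 \<and> even (m-2) then [:0,1:]^(nat (m-2) div 2) else 0)"
      using less[of "m-2"] False by simp
    have "h (q m) = [:0,1:] * h (q (m-2))"
      using q_rec[of m] False by (simp add: h_add h_mult h_w2 h_w3)
    also have "\<dots> = (if m \<ge> 0 \<and> even m then [:0,1:]^(nat m div 2) else 0)"
    proof (cases "even m")
      case True
      then obtain p where p: "m = 2*p" by (auto elim: evenE)
      with False have "p \<ge> 1" by simp
      then have "nat m div 2 = Suc (nat (m-2) div 2)" using p by (simp add: nat_mult_distrib)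
      then show ?thesis unfolding ih using True False p by simp
    next
      case F: False
      then show ?thesis unfolding ih by simp
    qed
    finally show ?thesis .
  qed
qed



lemma ch2: "(a::W2) + b = 0 \<longleftrightarrow> a = b"
  by (metis W2_two add_left_cancel)

lemma ideal_q: "m \<ge> 2 \<Longrightarrow> \<exists>s1 s2 s3. s1 * q (m-2) + s2 * q (m-1) + s3 * q m = w3 ^ nat (m-2)"
proof (induction m rule: int_ge_induct)
  case base
  have "q 1 = 0" using q_rec[of 1] by (simp add: q_neg)
  then show ?case by (intro exI[of _ 1] exI[of _ 0]) (simp add: q_0)
next
  case (step m)
  then obtain s1 s2 s3 where s: "s1 * q (m-2) + s2 * q (m-1) + s3 * q m = w3 ^ nat (m-2)" by blast
  have rec: "q (m+1) = w2 * q (m-1) + w3 * q (m-2)" using q_rec[of "m+1"] step.hyps by simp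
  have "(w3 * s2 - s1 * w2) * q (m+1-2) + (w3 * s3) * q (m+1-1) + s1 * q (m+1) = w3 * (s1 * q (m-2) + s2 * q (m-1) + s3 * q m)"
    unfolding rec by (simp add: algebra_simps)
  also have "\<dots> = w3 ^ nat (m+1-2)"
  proof -
    have "nat (m+1-2) = Suc (nat (m-2))" using step.hyps by simp
    then show ?thesis using s by simp
  qed
  finally show ?case by blast
qed

lemma w3_nz: "w3 \<noteq> 0" by (simp add: w3_def)

lemma prim_aux: "h d \<noteq> 0 \<Longrightarrow> c * w3^K = d * y \<Longrightarrow> \<exists>z. c = d * z"
proof (induction K arbitrary: y)
  case 0 then show ?case by auto
next
  case (Suc K)
  have "h (d * y) = 0" using Suc.prems(2)[symmetric] by (simp add: h_mult h_w3)
  then have "h y = 0" using Suc.prems(1) by (simp add: h_mult)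
  then obtain y' where y': "y = w3 * y'" using h_zero_dvd by (metis dvdE)
  have "w3 * (c * w3^K) = w3 * (d * y')" using Suc.prems(2) y' by (simp add: algebra_simps)
  then have "c * w3^K = d * y'" using w3_nz by simp
  then show ?case using Suc.IH Suc.prems(1) by blast
qed

lemma prim_gen:
  assumes s: "s1*D1 + s2*D2 + s3*D3 = w3^K" and hD: "h D1 \<noteq> 0"
    and r2: "D1*c2 = D2*c1" and r3: "D1*c3 = D3*c1"
  shows "\<exists>a. c1 = a*D1 \<and> c2 = a*D2 \<and> c3 = a*D3"
proof -
  have "c1 * w3^K = s1*D1*c1 + s2*(D2*c1) + s3*(D3*c1)"
    unfolding s[symmetric] by (simp add: algebra_simps)
  also have "\<dots> = s1*D1*c1 + s2*(D1*c2) + s3*(D1*c3)" unfolding r2 r3 ..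
  also have "\<dots> = D1 * (s1*c1 + s2*c2 + s3*c3)" by (simp add: algebra_simps)
  finally have "c1 * w3^K = D1 * (s1*c1 + s2*c2 + s3*c3)" .
  then obtain z where z: "c1 = D1 * z" using prim_aux[OF hD] by blast
  have D1nz: "D1 \<noteq> 0" using hD by (auto simp: h_def)
  have "D1 * c2 = D1 * (z * D2)" using r2 z by (simp add: algebra_simps)
  then have "c2 = z * D2" using D1nz by simp
  moreover have "D1 * c3 = D1 * (z * D3)" using r3 z by (simp add: algebra_simps)
  then have "c3 = z * D3" using D1nz by simp
  ultimately show ?thesis using z by (auto simp: ac_simps)
qed


lemma h_q_even: "m \<ge> 0 \<Longrightarrow> even m \<Longrightarrow> h (q m) \<noteq> 0"
  by (simp add: h_q)

lemma prim_q:
  assumes m: "m \<ge> 2"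
    and r12: "q (m-2) * c2 = q (m-1) * c1" and r13: "q (m-2) * c3 = q m * c1"
    and r23: "q (m-1) * c3 = q m * c2"
  shows "\<exists>a. c1 = a * q (m-2) \<and> c2 = a * q (m-1) \<and> c3 = a * q m"
proof -
  obtain s1 s2 s3 where s: "s1 * q (m-2) + s2 * q (m-1) + s3 * q m = w3 ^ nat (m-2)"
    using ideal_q[OF m] by blast
  show ?thesis
  proof (cases "even m")
    case True
    have "\<exists>a. c3 = a * q m \<and> c1 = a * q (m-2) \<and> c2 = a * q (m-1)"
      by (rule prim_gen[of s3 _ s1 _ s2 _ "nat (m-2)"])
        (use s h_q_even[of m] m True r13 r23 in \<open>simp_all add: algebra_simps\<close>)
    then show ?thesis by blast
  next
    case False
    have "\<exists>a. c2 = a * q (m-1) \<and> c1 = a * q (m-2) \<and> c3 = a * q m"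
      by (rule prim_gen[of s2 _ s1 _ s3 _ "nat (m-2)"])
        (use s h_q_even[of "m-1"] m False r12 r23 in \<open>simp_all add: algebra_simps\<close>)
    then show ?thesis by blast
  qed
qed


lemma whom_0: "whom d 0" by (simp add: whom_def)
lemma whom_add: "whom d p \<Longrightarrow> whom d p' \<Longrightarrow> whom d (p + p')"
  unfolding whom_def by (metis add.right_neutral coeff_add)
lemma sum_nz: "sum f A \<noteq> 0 \<Longrightarrow> \<exists>x\<in>A. f x \<noteq> 0" by (metis sum.neutral)
lemma whom_mult: assumes "whom d p" "whom d' p'" shows "whom (d + d') (p * p')"
  unfolding whom_def
proof (intro allI impI)
  fix a b assume "coeff (coeff (p * p') a) b \<noteq> 0"
  then have S: "(\<Sum>k\<le>a. \<Sum>l\<le>b. coeff (coeff p k) l * coeff (coeff p' (a-k)) (b-l)) \<noteq> 0"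
    by (simp only: coeff_mult[of p p'] coeff_sum coeff_mult not_False_eq_True)
  from sum_nz[OF S] obtain k where k: "k \<le> a" "(\<Sum>l\<le>b. coeff (coeff p k) l * coeff (coeff p' (a-k)) (b-l)) \<noteq> 0"
    by auto
  from sum_nz[OF k(2)] obtain l where l: "l \<le> b" "coeff (coeff p k) l * coeff (coeff p' (a-k)) (b-l) \<noteq> 0"
    by auto
  note kl = k(1) l
  have n1: "coeff (coeff p k) l \<noteq> 0" using kl(3) by (metis mult_zero_left mult_zero_right)
  have n2: "coeff (coeff p' (a-k)) (b-l) \<noteq> 0" using kl(3) by (metis mult_zero_left mult_zero_right)
  have "int (2*k + 3*l) = d" using assms(1) n1 unfolding whom_def by blast
  moreover have "int (2*(a-k) + 3*(b-l)) = d'" using assms(2) n2 unfolding whom_def by blast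
  ultimately have "int (2*k + 3*l) = d" "int (2*(a-k) + 3*(b-l)) = d'" by auto
  then show "int (2*a + 3*b) = d + d'" using kl by linarith
qed
lemma whom_cong: "whom d p \<Longrightarrow> d = d' \<Longrightarrow> whom d' p" by simp
lemma whom_w2: "whom 2 w2"
  unfolding whom_def w2_def by (simp add: coeff_pCons split: nat.splits)
lemma whom_w3: "whom 3 w3"
  unfolding whom_def w3_def by (simp add: coeff_pCons split: nat.splits)
lemma whom_1: "whom 0 1"
  unfolding whom_def by (simp add: coeff_pCons one_pCons split: nat.splits)

lemma q_hom: "whom m (q m)"
proof (induction "nat (m+1)" arbitrary: m rule: less_induct)
  case less
  show ?case
  proof (cases "m \<le> 0")
    case True then show ?thesis by (cases "m = 0") (simp_all add: q_neg q_0 whom_0 whom_1)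
  next
    case False
    have a: "whom (m-2) (q (m-2))" "whom (m-3) (q (m-3))" using less[of "m-2"] less[of "m-3"] False by auto
    have e: "q m = w2 * q (m - 2) + w3 * q (m - 3)" using q_rec[of m] False by simp
    show ?thesis unfolding e
      by (auto intro!: whom_add whom_cong[OF whom_mult[OF whom_w2 a(1)]] whom_cong[OF whom_mult[OF whom_w3 a(2)]])
  qed
qed

lemma r_hom: "whom (2*m) (r m)"
proof (induction "nat (m+1)" arbitrary: m rule: less_induct)
  case less
  show ?case
  proof (cases "m \<le> 0")
    case True then show ?thesis by (cases "m = 0") (simp_all add: r_neg r_0 whom_0 whom_1)
  next
    case False
    have a: "whom (2*(m-1)) (r (m-1))" "whom (2*(m-3)) (r (m-3))" using less[of "m-1"] less[of "m-3"] False by auto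
    have e: "r m = w2 * r (m - 1) + w3^2 * r (m - 3)" using r_rec[of m] False by simp
    have w: "whom 6 (w3^2)" using whom_mult[OF whom_w3 whom_w3] by (simp add: power2_eq_square)
    show ?thesis unfolding e
      by (auto intro!: whom_add whom_cong[OF whom_mult[OF whom_w2 a(1)]] whom_cong[OF whom_mult[OF w a(2)]])
  qed
qed


lemma W2_x2: "(x::W2) * 2 = 0" by (simp add: W2_2)

lemma abs_main:
  fixes u1 u2 u3 v1 v2 v3 D1 D2 D3 :: W2
  assumes C1: "D1 = u2 * v3 + u3 * v2" and C2: "D2 = u1 * v3 + u3 * v1" and C3: "D3 = u1 * v2 + u2 * v1"
  and prim: "\<And>c1 c2 c3. D1*c2 = D2*c1 \<Longrightarrow> D1*c3 = D3*c1 \<Longrightarrow> D2*c3 = D3*c2 \<Longrightarrow>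
              \<exists>a. c1 = a*D1 \<and> c2 = a*D2 \<and> c3 = a*D3"
  and nz: "D1 \<noteq> 0 \<or> D2 \<noteq> 0 \<or> D3 \<noteq> 0"
  shows "D1*x + D2*y + D3*z = 0 \<longleftrightarrow> (\<exists>a b. x = a*u1 + b * v1 \<and> y = a*u2 + b * v2 \<and> z = a*u3 + b * v3)"
proof
  assume S: "D1*x + D2*y + D3*z = 0"
  define c1 c2 c3 where "c1 = y * v3 + z * v2" and "c2 = x * v3 + z * v1" and "c3 = x * v2 + y * v1"
  define e1 e2 e3 where "e1 = u2*z + u3*y" and "e2 = u1*z + u3*x" and "e3 = u1*y + u2*x"
  have i1: "D1*c2 + D2*c1 + v3*(D1*x + D2*y + D3*z) = 0"
    unfolding C1 C2 C3 c1_def c2_def by (simp add: algebra_simps W2_2x W2_x2)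
  have i2: "D1*c3 + D3*c1 + v2*(D1*x + D2*y + D3*z) = 0"
    unfolding C1 C2 C3 c1_def c3_def by (simp add: algebra_simps W2_2x W2_x2)
  have i3: "D2*c3 + D3*c2 + v1*(D1*x + D2*y + D3*z) = 0"
    unfolding C1 C2 C3 c2_def c3_def by (simp add: algebra_simps W2_2x W2_x2)
  have r1: "D1*c2 = D2*c1" using i1 unfolding S by (simp add: ch2)
  have r2: "D1*c3 = D3*c1" using i2 unfolding S by (simp add: ch2)
  have r3: "D2*c3 = D3*c2" using i3 unfolding S by (simp add: ch2)
  obtain a where a: "c1 = a*D1" "c2 = a*D2" "c3 = a*D3" using prim[OF r1 r2 r3] by blast
  have k1: "D1*e2 + D2*e1 + u3*(D1*x + D2*y + D3*z) = 0"
    unfolding C1 C2 C3 e1_def e2_def by (simp add: algebra_simps W2_2x W2_x2)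
  have k2: "D1*e3 + D3*e1 + u2*(D1*x + D2*y + D3*z) = 0"
    unfolding C1 C2 C3 e1_def e3_def by (simp add: algebra_simps W2_2x W2_x2)
  have k3: "D2*e3 + D3*e2 + u1*(D1*x + D2*y + D3*z) = 0"
    unfolding C1 C2 C3 e2_def e3_def by (simp add: algebra_simps W2_2x W2_x2)
  have s1: "D1*e2 = D2*e1" using k1 unfolding S by (simp add: ch2)
  have s2: "D1*e3 = D3*e1" using k2 unfolding S by (simp add: ch2)
  have s3: "D2*e3 = D3*e2" using k3 unfolding S by (simp add: ch2)
  obtain b where b: "e1 = b*D1" "e2 = b*D2" "e3 = b*D3" using prim[OF s1 s2 s3] by blast
  have g11: "D1*x + c1*u1 + e1* v1 + (D1*x + D2*y + D3*z) = 0"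
    unfolding C1 C2 C3 c1_def e1_def by (simp add: algebra_simps W2_2x W2_x2)
  have g12: "D1*y + c1*u2 + e1* v2 = 0"
    unfolding C1 C2 C3 c1_def e1_def by (simp add: algebra_simps W2_2x W2_x2)
  have g13: "D1*z + c1*u3 + e1* v3 = 0"
    unfolding C1 C2 C3 c1_def e1_def by (simp add: algebra_simps W2_2x W2_x2)
  have g21: "D2*x + c2*u1 + e2* v1 = 0"
    unfolding C1 C2 C3 c2_def e2_def by (simp add: algebra_simps W2_2x W2_x2)
  have g22: "D2*y + c2*u2 + e2* v2 + (D1*x + D2*y + D3*z) = 0"
    unfolding C1 C2 C3 c2_def e2_def by (simp add: algebra_simps W2_2x W2_x2)
  have g23: "D2*z + c2*u3 + e2* v3 = 0"
    unfolding C1 C2 C3 c2_def e2_def by (simp add: algebra_simps W2_2x W2_x2)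
  have g31: "D3*x + c3*u1 + e3* v1 = 0"
    unfolding C1 C2 C3 c3_def e3_def by (simp add: algebra_simps W2_2x W2_x2)
  have g32: "D3*y + c3*u2 + e3* v2 = 0"
    unfolding C1 C2 C3 c3_def e3_def by (simp add: algebra_simps W2_2x W2_x2)
  have g33: "D3*z + c3*u3 + e3* v3 + (D1*x + D2*y + D3*z) = 0"
    unfolding C1 C2 C3 c3_def e3_def by (simp add: algebra_simps W2_2x W2_x2)
  have G: "\<And>D c e. D * x + c * u1 + e * v1 = 0 \<Longrightarrow> D * y + c * u2 + e * v2 = 0 \<Longrightarrow> D * z + c * u3 + e * v3 = 0
      \<Longrightarrow> c = a * D \<Longrightarrow> e = b * D \<Longrightarrow> D \<noteq> 0 \<Longrightarrow> x = a*u1 + b* v1 \<and> y = a*u2 + b* v2 \<and> z = a*u3 + b* v3"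
  proof -
    fix D c e assume h: "D * x + c * u1 + e * v1 = 0" "D * y + c * u2 + e * v2 = 0" "D * z + c * u3 + e * v3 = 0"
      "c = a * D" "e = b * D" "D \<noteq> 0"
    have "D * x = D * (a*u1 + b* v1)" using h(1) unfolding h(4,5) by (simp add: ch2 algebra_simps add.assoc)
    moreover have "D * y = D * (a*u2 + b* v2)" using h(2) unfolding h(4,5) by (simp add: ch2 algebra_simps add.assoc)
    moreover have "D * z = D * (a*u3 + b* v3)" using h(3) unfolding h(4,5) by (simp add: ch2 algebra_simps add.assoc)
    ultimately show "x = a*u1 + b* v1 \<and> y = a*u2 + b* v2 \<and> z = a*u3 + b* v3" using h(6) by simp
  qed
  from nz show "\<exists>a b. x = a*u1 + b* v1 \<and> y = a*u2 + b* v2 \<and> z = a*u3 + b* v3"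
  proof (elim disjE)
    assume "D1 \<noteq> 0" then show ?thesis using G[OF _ g12 g13 a(1) b(1)] g11 unfolding S by auto
  next
    assume "D2 \<noteq> 0" then show ?thesis using G[OF g21 _ g23 a(2) b(2)] g22 unfolding S by auto
  next
    assume "D3 \<noteq> 0" then show ?thesis using G[OF g31 g32 _ a(3) b(3)] g33 unfolding S by auto
  qed
next
  assume "\<exists>a b. x = a*u1 + b* v1 \<and> y = a*u2 + b* v2 \<and> z = a*u3 + b* v3"
  then obtain a b where "x = a*u1 + b* v1" "y = a*u2 + b* v2" "z = a*u3 + b* v3" by blast
  then show "D1*x + D2*y + D3*z = 0"
    unfolding C1 C2 C3 by (simp add: algebra_simps W2_2x W2_x2)
qed

lemma abs_indep:
  fixes u1 u2 u3 v1 v2 v3 D1 D2 D3 :: W2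
  assumes C1: "D1 = u2* v3 + u3* v2" and C2: "D2 = u1* v3 + u3* v1" and C3: "D3 = u1* v2 + u2* v1"
  and nz: "D1 \<noteq> 0 \<or> D2 \<noteq> 0 \<or> D3 \<noteq> 0"
  and X: "a*u1 + b* v1 = 0" "a*u2 + b* v2 = 0" "a*u3 + b* v3 = 0"
  shows "a = 0 \<and> b = 0"
proof -
  have "a*D1 = (a*u2 + b* v2)* v3 + (a*u3 + b* v3)* v2"
    unfolding C1 by (simp add: algebra_simps W2_2x W2_x2)
  moreover have "a*D2 = (a*u1 + b* v1)* v3 + (a*u3 + b* v3)* v1"
    unfolding C2 by (simp add: algebra_simps W2_2x W2_x2)
  moreover have "a*D3 = (a*u1 + b* v1)* v2 + (a*u2 + b* v2)* v1"
    unfolding C3 by (simp add: algebra_simps W2_2x W2_x2)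
  moreover have "b*D1 = (a*u2 + b* v2)*u3 + (a*u3 + b* v3)*u2"
    unfolding C1 by (simp add: algebra_simps W2_2x W2_x2)
  moreover have "b*D2 = (a*u1 + b* v1)*u3 + (a*u3 + b* v3)*u1"
    unfolding C2 by (simp add: algebra_simps W2_2x W2_x2)
  moreover have "b*D3 = (a*u1 + b* v1)*u2 + (a*u2 + b* v2)*u1"
    unfolding C3 by (simp add: algebra_simps W2_2x W2_x2)
  ultimately have "a*D1 = 0" "a*D2 = 0" "a*D3 = 0" "b*D1 = 0" "b*D2 = 0" "b*D3 = 0"
    unfolding X by simp_all
  then show ?thesis using nz by auto
qed

lemma abs_det:
  fixes u1 u2 u3 v1 v2 v3 D1 D2 D3 :: W2
  assumes C1: "D1 = u2* v3 + u3* v2" and C2: "D2 = u1* v3 + u3* v1" and C3: "D3 = u1* v2 + u2* v1"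
  shows "D1*x + D2*y + D3*z = det (vector [vector [x, u1, v1], vector [y, u2, v2], vector [z, u3, v3]] :: W2^3^3)"
  unfolding C1 C2 C3 det_3 by (simp add: W2_minus algebra_simps)



theorem mainTheorem17:
  fixes n t :: nat
  assumes "2^(t-1) < n" and "n \<le> 2^t - 4"
  defines "i \<equiv> (2::int)^t - 3 - int n"
      and "j \<equiv> int n - (2::int)^(t-1) + 1"
  shows "(\<forall>x y z :: W2. d1 n x y z =
           det (vector [vector [x, r j, w3 * q (i - 1)],
                        vector [y, w3 * r (j - 2), q (i + 1)],
                        vector [z, r (j - 1), q i]] :: W2^3^3)) \<and>
         (\<forall>x y z :: W2. d1 n x y z = 0 \<longleftrightarrow>
           (\<exists>a b :: W2. x = a * r j + b * (w3 * q (i - 1)) \<and>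
                        y = a * (w3 * r (j - 2)) + b * q (i + 1) \<and>
                        z = a * r (j - 1) + b * q i)) \<and>
         (\<forall>a b :: W2. (a * r j + b * (w3 * q (i - 1)) = 0 \<and>
                     a * (w3 * r (j - 2)) + b * q (i + 1) = 0 \<and>
                     a * r (j - 1) + b * q i = 0) \<longrightarrow> a = 0 \<and> b = 0) \<and>
         (\<exists>e. hom3 n e (r j, w3 * r (j - 2), r (j - 1))) \<and>
         (\<exists>e. hom3 n e (w3 * q (i - 1), q (i + 1), q i))"
proof -
  define M where "M = (2::int)^(t-1)"
  have t1: "t \<ge> 2"
  proof (rule ccontr)
    assume "\<not> t \<ge> 2"
    then have "t = 0 \<or> t = 1" by linarith
    then show False using assms(1,2) by (elim disjE) simp_all
  qed
  have tS: "t = Suc (t - 1)" using t1 by simp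
  have tM: "(2::int)^t = 2 * M" unfolding M_def by (subst tS) (simp only: power_Suc)
  have n1: "M < int n" using assms(1) unfolding M_def by (simp add: of_nat_less_iff[symmetric])
  have p4: "(2::nat)^2 \<le> 2^t" by (rule power_increasing) (use t1 in simp_all)
  then have "n + 4 \<le> 2^t" using assms(2) by simp
  then have "int n + 4 \<le> int (2^t)" by linarith
  then have n2: "int n + 4 \<le> 2 * M" using tM by simp
  have idef: "i = 2*M - 3 - int n" unfolding i_def tM ..
  have jdef: "j = int n - M + 1" unfolding j_def M_def ..
  have j2: "j \<ge> 2" using n1 jdef by simp
  have i1: "i \<ge> 1" using n2 idef by simp
  have ij: "i = M - 2 - j" using idef jdef by simp
  have qM: "q (M - 3) = 0" unfolding M_def using q_pow[of "t-1"] t1 by simp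
  have L2: "q (M - 2 + j) = r j * q (M - 2 - j) + w3 * r (j - 1) * q (M - 3 - j) + w3 * q (j - 2) * q (M - 3)"
    using L1[of j M] j2 ij i1 by simp
  have L3: "q (M - 2 + (j-1)) = r (j-1) * q (M - 2 - (j-1)) + w3 * r (j - 1 - 1) * q (M - 3 - (j-1)) + w3 * q (j - 1 - 2) * q (M - 3)"
    using L1[of "j-1" M] j2 ij i1 by simp
  have L4: "q (M - 2 + (j+1)) = r (j+1) * q (M - 2 - (j+1)) + w3 * r (j + 1 - 1) * q (M - 3 - (j+1)) + w3 * q (j + 1 - 2) * q (M - 3)"
    using L1[of "j+1" M] j2 ij i1 by simp
  have e: "M - 2 + j = int n - 1" "M - 2 - j = i" "M - 3 - j = i - 1" "M - 2 + (j-1) = int n - 2"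
    "M - 2 - (j-1) = i + 1" "j - 1 - 1 = j - 2" "M - 3 - (j-1) = i" "M - 2 + (j+1) = int n"
    "M - 2 - (j+1) = i - 1" "j + 1 - 1 = j" "M - 3 - (j+1) = i - 2"
    using ij jdef by simp_all
  have Rj: "r (j+1) = w2 * r j + w3^2 * r (j - 2)" using r_rec[of "j+1"] j2 by simp
  have Qi: "q (i+1) = w2 * q (i - 1) + w3 * q (i - 2)" using q_rec[of "i+1"] i1 by simp
  have C2: "q (int n - 1) = r j * (q i) + r (j - 1) * (w3 * q (i - 1))"
    using L2[unfolded e qM] by (simp add: algebra_simps)
  have C1: "q (int n - 2) = (w3 * r (j - 2)) * q i + r (j - 1) * q (i + 1)"
    using L3[unfolded e qM] by (simp add: algebra_simps)
  have C3: "q (int n) = r j * q (i + 1) + (w3 * r (j - 2)) * (w3 * q (i - 1))"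
    using L4[unfolded e qM] unfolding Rj Qi by (simp add: algebra_simps power2_eq_square)
  have M1: "M \<ge> 1" unfolding M_def by simp
  have nm: "int n \<ge> 2" using n1 M1 by linarith
  have prim: "\<And>c1 c2 c3. q (int n - 2) * c2 = q (int n - 1) * c1 \<Longrightarrow> q (int n - 2) * c3 = q (int n) * c1
      \<Longrightarrow> q (int n - 1) * c3 = q (int n) * c2 \<Longrightarrow>
      \<exists>a. c1 = a * q (int n - 2) \<and> c2 = a * q (int n - 1) \<and> c3 = a * q (int n)"
    using prim_q[of "int n"] nm by blast
  have nz: "q (int n - 2) \<noteq> 0 \<or> q (int n - 1) \<noteq> 0 \<or> q (int n) \<noteq> 0"
  proof (cases "even (int n)")
    case True then show ?thesis using h_q_even[of "int n"] by (auto simp: h_def)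
  next
    case False then show ?thesis using h_q_even[of "int n - 1"] nm by (auto simp: h_def)
  qed
  have P1: "\<forall>x y z :: W2. d1 n x y z =
           det (vector [vector [x, r j, w3 * q (i - 1)],
                        vector [y, w3 * r (j - 2), q (i + 1)],
                        vector [z, r (j - 1), q i]] :: W2^3^3)"
    unfolding d1_def using abs_det[OF C1 C2 C3] by blast
  have P2: "\<forall>x y z :: W2. d1 n x y z = 0 \<longleftrightarrow>
           (\<exists>a b :: W2. x = a * r j + b * (w3 * q (i - 1)) \<and>
                        y = a * (w3 * r (j - 2)) + b * q (i + 1) \<and>
                        z = a * r (j - 1) + b * q i)"
    unfolding d1_def using abs_main[OF C1 C2 C3 prim nz] by blast
  have P3: "\<forall>a b :: W2. (a * r j + b * (w3 * q (i - 1)) = 0 \<and>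
                     a * (w3 * r (j - 2)) + b * q (i + 1) = 0 \<and>
                     a * r (j - 1) + b * q i = 0) \<longrightarrow> a = 0 \<and> b = 0"
    using abs_indep[OF C1 C2 C3 nz] by blast
  have P4: "hom3 n (2*j + int n - 2) (r j, w3 * r (j - 2), r (j - 1))"
    unfolding hom3_def
    using whom_cong[OF r_hom[of j]] whom_cong[OF whom_mult[OF whom_w3 r_hom[of "j-2"]]] whom_cong[OF r_hom[of "j-1"]]
    by simp
  have P5: "hom3 n (int n + i) (w3 * q (i - 1), q (i + 1), q i)"
    unfolding hom3_def
    using whom_cong[OF whom_mult[OF whom_w3 q_hom[of "i-1"]]] whom_cong[OF q_hom[of "i+1"]] whom_cong[OF q_hom[of i]]
    by (simp add: add.commute)
  show ?thesis using P1 P2 P3 P4 P5 by blast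
qed


end
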